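(* Let $C$ be a cycle and $\mathcal H$ a family of vertex subsets of $C$ such that $(C,\mathcal H)$ is $axax$-free. Then there is an outerplanar graph $Q^*$ with vertex set $\mathcal H$ such that for every vertex $v$ of $C$ the set $\{H\in\mathcal H: v\in H\}$ induces a connected subgraph of $Q^*$.
   Context: Let $C$ be a cycle with a fixed cyclic orientation; "vertices $p_1,\dots,p_4$ in cyclic order" means four distinct vertices met in this order when traversing $C$. A pair $H,H'\in\mathcal H$ is an $axax$-pair if there are vertices $a_1,x_1,a_2,x_2$ in cyclic order with $a_1,a_2\in H\setminus H'$ and $x_1,x_2\in H'$; $(C,\mathcal H)$ is $axax$-free if it has no $axax$-pair. A graph is outerplanar if it has a plane embedding with all vertices on the outer face. *)

theory Defs
  imports "HOL-Analysis.Analysis"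
begin

text \<open>The cycle C has vertex set {0..<n} (n >= 3), with the cyclic orientation
  0 -> 1 -> ... -> n-1 -> 0.  Four vertices are in cyclic order iff some cyclic
  rotation of them is strictly increasing.\<close>

definition cyclic_order4 :: "nat \<Rightarrow> nat \<Rightarrow> nat \<Rightarrow> nat \<Rightarrow> bool" where
  "cyclic_order4 p1 p2 p3 p4 \<longleftrightarrow>
     (p1 < p2 \<and> p2 < p3 \<and> p3 < p4) \<or> (p2 < p3 \<and> p3 < p4 \<and> p4 < p1) \<or>
     (p3 < p4 \<and> p4 < p1 \<and> p1 < p2) \<or> (p4 < p1 \<and> p1 < p2 \<and> p2 < p3)"

definition axax_pair :: "nat set set \<Rightarrow> nat set \<Rightarrow> nat set \<Rightarrow> bool" where
  "axax_pair \<H> H H' \<longleftrightarrow> H \<in> \<H> \<and> H' \<in> \<H> \<and>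
     (\<exists>a1 x1 a2 x2. cyclic_order4 a1 x1 a2 x2 \<and> a1 \<in> H - H' \<and> a2 \<in> H - H'
        \<and> x1 \<in> H' \<and> x2 \<in> H')"

definition axax_free :: "nat set set \<Rightarrow> bool" where
  "axax_free \<H> \<longleftrightarrow> \<not> (\<exists>H H'. axax_pair \<H> H H')"

definition simple_graph :: "'v set \<Rightarrow> 'v set set \<Rightarrow> bool" where
  "simple_graph V E \<longleftrightarrow> finite V \<and> E \<subseteq> {{u, v} | u v. u \<in> V \<and> v \<in> V \<and> u \<noteq> v}"

text \<open>Outerplanar: there is a plane embedding (vertices as distinct points of the
  plane, edges as arcs joining their endpoints, arcs avoid vertex points in their
  interior and pairwise meet only in vertex points) such that every vertex lies on
  the boundary of the outer (unbounded) face.\<close>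

definition outerplanar :: "'v set \<Rightarrow> 'v set set \<Rightarrow> bool" where
  "outerplanar V E \<longleftrightarrow> simple_graph V E \<and>
    (\<exists>(pos :: 'v \<Rightarrow> complex) (\<gamma> :: 'v set \<Rightarrow> real \<Rightarrow> complex).
       inj_on pos V \<and>
       (\<forall>e\<in>E. arc (\<gamma> e) \<and>
          (\<exists>u v. e = {u, v} \<and> pathstart (\<gamma> e) = pos u \<and> pathfinish (\<gamma> e) = pos v)) \<and>
       (\<forall>e\<in>E. \<forall>t\<in>{0<..<1}. \<gamma> e t \<notin> pos ` V) \<and>
       (\<forall>e\<in>E. \<forall>e'\<in>E. e \<noteq> e' \<longrightarrow> path_image (\<gamma> e) \<inter> path_image (\<gamma> e') \<subseteq> pos ` V) \<and>
       (\<forall>v\<in>V. pos v \<in> frontier (outside (pos ` V \<union> (\<Union>e\<in>E. path_image (\<gamma> e))))))"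

definition induces_connected :: "'v set set \<Rightarrow> 'v set \<Rightarrow> bool" where
  "induces_connected E S \<longleftrightarrow>
     (\<forall>x\<in>S. \<forall>y\<in>S. (\<lambda>a b. a \<in> S \<and> b \<in> S \<and> {a, b} \<in> E)\<^sup>*\<^sup>* x y)"

end

theory Submission
  imports Defs
begin

definition book :: "'v set \<Rightarrow> 'v set set \<Rightarrow> ('v \<Rightarrow> nat) \<Rightarrow> bool" where
 "book V E f \<longleftrightarrow> finite V \<and> inj_on f V \<and> E \<subseteq> {{u, v} | u v. u \<in> V \<and> v \<in> V \<and> u \<noteq> v} \<and>
   (\<forall>a b c d. {a,b} \<in> E \<longrightarrow> {c,d} \<in> E \<longrightarrow> \<not> (f a < f c \<and> f c < f b \<and> f b < f d))"

definition curve :: "real \<Rightarrow> real \<Rightarrow> real \<Rightarrow> complex" where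
 "curve a b t = Complex (a + (b-a)*t) ((b-a)^2 * t * (1-t))"

lemma curve_Im: "Im (curve a b t) = (Re (curve a b t) - a) * (b - Re (curve a b t))"
  by (simp add: curve_def power2_eq_square algebra_simps)

lemma nested_ineq:
  fixes a b a' b' x :: real
  assumes "a \<le> a'" "b' \<le> b" "a' < x" "x < b'" "a \<noteq> a' \<or> b \<noteq> b'"
  shows "(x - a') * (b' - x) < (x - a) * (b - x)"
proof (cases "a = a'")
  case True
  then have "b' < b" using assms by auto
  then show ?thesis using assms True by (simp add: mult_strict_left_mono)
next
  case False
  then have "a < a'" using assms by auto
  then have "(x - a') * (b' - x) < (x - a) * (b' - x)" using assms by (simp add: mult_strict_right_mono)
  also have "\<dots> \<le> (x - a) * (b - x)" using assms \<open>a < a'\<close> by (simp add: mult_left_mono)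
  finally show ?thesis .
qed

lemma no_common_point:
  fixes a b a' b' x :: real
  assumes "a < x" "x < b" "a' < x" "x < b'"
    and eq: "(x - a) * (b - x) = (x - a') * (b' - x)"
    and ne: "a \<noteq> a' \<or> b \<noteq> b'"
    and nc1: "\<not> (a < a' \<and> a' < b \<and> b < b')" and nc2: "\<not> (a' < a \<and> a < b' \<and> b' < b)"
  shows False
proof -
  have "(a \<le> a' \<and> b' \<le> b) \<or> (a' \<le> a \<and> b \<le> b')" using assms by linarith
  then show False
  proof
    assume "a \<le> a' \<and> b' \<le> b"
    then show False using nested_ineq[of a a' b' b x] assms by auto
  next
    assume "a' \<le> a \<and> b \<le> b'"
    then show False using nested_ineq[of a' a b b' x] assms by auto
  qed
qed

lemma curve_arc:
  assumes "a < b"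
  shows "arc (curve a b)"
proof -
  have "continuous_on {0..1} (curve a b)"
  proof -
    have "curve a b = (\<lambda>t. complex_of_real (a + (b-a)*t) + \<i> * complex_of_real ((b-a)^2 * t * (1-t)))"
      by (auto simp: curve_def Complex_eq)
    then show ?thesis by (auto intro!: continuous_intros)
  qed
  moreover have "inj_on (curve a b) {0..1}"
  proof
    fix p q assume "p \<in> {0..1}" "q \<in> {0..1}" "curve a b p = curve a b q"
    then have "a + (b-a)*p = a + (b-a)*q" by (metis complex.inject curve_def)
    then show "p = q" using assms by simp
  qed
  ultimately show ?thesis by (simp add: arc_def path_def)
qed

lemma curve_start: "pathstart (curve a b) = Complex a 0"
  by (simp add: pathstart_def curve_def)
lemma curve_finish: "pathfinish (curve a b) = Complex b 0"
  by (simp add: pathfinish_def curve_def)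

lemma curve_Re_range:
  assumes "a < b" "t \<in> {0..1}"
  shows "a \<le> Re (curve a b t)" "Re (curve a b t) \<le> b"
proof -
  have "(b-a)*t \<ge> 0" "(b-a)*t \<le> (b-a)" using assms by (auto simp: mult_left_le)
  then show "a \<le> Re (curve a b t)" "Re (curve a b t) \<le> b" by (auto simp: curve_def)
qed

lemma curve_Im_nonneg:
  assumes "a < b" "t \<in> {0..1}"
  shows "0 \<le> Im (curve a b t)"
  using curve_Re_range[OF assms] by (simp add: curve_Im)

lemma curve_Im_zero:
  assumes "a < b" "t \<in> {0..1}" "Im (curve a b t) = 0"
  shows "curve a b t = Complex a 0 \<or> curve a b t = Complex b 0"
proof -
  have "Re (curve a b t) = a \<or> Re (curve a b t) = b" using assms(3) unfolding curve_Im by auto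
  then show ?thesis using assms(3) by (metis complex_surj eq_commute)
qed

lemma curve_open_pos:
  assumes "a < b" "t \<in> {0<..<1}"
  shows "0 < Im (curve a b t)"
  using assms by (simp add: curve_def)

lemma book_edge:
  assumes "book V E f" "e \<in> E"
  shows "\<exists>u v. e = {u,v} \<and> u \<in> V \<and> v \<in> V \<and> f u < f v \<and> Min (f ` e) = f u \<and> Max (f ` e) = f v"
proof -
  obtain u v where e: "e = {u,v}" "u \<in> V" "v \<in> V" "u \<noteq> v" using assms unfolding book_def by blast
  have "f u \<noteq> f v" using assms e unfolding book_def inj_on_def by metis
  then show ?thesis
  proof (cases "f u < f v")
    case True then show ?thesis using e by (intro exI[of _ u] exI[of _ v]) auto
  next
    case False then show ?thesis using e \<open>f u \<noteq> f v\<close> by (intro exI[of _ v] exI[of _ u]) auto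
  qed
qed

lemma book_outerplanar:
  assumes B: "book V E f"
  shows "outerplanar V E"
proof -
  define pos where "pos = (\<lambda>v. Complex (real (f v)) 0)"
  define \<gamma> where "\<gamma> = (\<lambda>e. curve (real (Min (f ` e))) (real (Max (f ` e))))"
  have fin: "finite V" and inj: "inj_on f V" and Esub: "E \<subseteq> {{u, v} | u v. u \<in> V \<and> v \<in> V \<and> u \<noteq> v}"
    and nc: "\<And>a b c d. {a,b} \<in> E \<Longrightarrow> {c,d} \<in> E \<Longrightarrow> \<not> (f a < f c \<and> f c < f b \<and> f b < f d)"
    using B unfolding book_def by blast+
  have sg: "simple_graph V E" using fin Esub by (simp add: simple_graph_def)
  have injpos: "inj_on pos V" using inj unfolding pos_def inj_on_def by auto
  have edge: "\<And>e. e \<in> E \<Longrightarrow> \<exists>u v. e = {u,v} \<and> u \<in> V \<and> v \<in> V \<and> f u < f v \<and> \<gamma> e = curve (real (f u)) (real (f v))"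
    using book_edge[OF B] unfolding \<gamma>_def by metis
  have A1: "\<forall>e\<in>E. arc (\<gamma> e) \<and> (\<exists>u v. e = {u, v} \<and> pathstart (\<gamma> e) = pos u \<and> pathfinish (\<gamma> e) = pos v)"
  proof
    fix e assume "e \<in> E"
    then obtain u v where uv: "e = {u,v}" "u \<in> V" "v \<in> V" "f u < f v" "\<gamma> e = curve (real (f u)) (real (f v))"
      using edge by blast
    show "arc (\<gamma> e) \<and> (\<exists>u v. e = {u, v} \<and> pathstart (\<gamma> e) = pos u \<and> pathfinish (\<gamma> e) = pos v)"
      using uv curve_arc[of "real (f u)" "real (f v)"] curve_start curve_finish unfolding pos_def by auto
  qed
  have Vreal: "\<And>z. z \<in> pos ` V \<Longrightarrow> Im z = 0" unfolding pos_def by auto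
  have A2: "\<forall>e\<in>E. \<forall>t\<in>{0<..<1}. \<gamma> e t \<notin> pos ` V"
  proof (intro ballI)
    fix e t assume "e \<in> E" "t \<in> {0<..<1::real}"
    then obtain u v where uv: "f u < f v" "\<gamma> e = curve (real (f u)) (real (f v))"
      using edge by blast
    have "0 < Im (\<gamma> e t)" using uv curve_open_pos \<open>t \<in> _\<close> by simp
    then show "\<gamma> e t \<notin> pos ` V" using Vreal by force
  qed
  have A3: "\<forall>e\<in>E. \<forall>e'\<in>E. e \<noteq> e' \<longrightarrow> path_image (\<gamma> e) \<inter> path_image (\<gamma> e') \<subseteq> pos ` V"
  proof (intro ballI impI subsetI)
    fix e e' z assume ee: "e \<in> E" "e' \<in> E" "e \<noteq> e'" and z: "z \<in> path_image (\<gamma> e) \<inter> path_image (\<gamma> e')"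
    obtain u v where uv: "e = {u,v}" "u \<in> V" "v \<in> V" "f u < f v" "\<gamma> e = curve (real (f u)) (real (f v))"
      using edge ee by blast
    obtain u' v' where uv': "e' = {u',v'}" "u' \<in> V" "v' \<in> V" "f u' < f v'" "\<gamma> e' = curve (real (f u')) (real (f v'))"
      using edge ee by blast
    obtain t where t: "t \<in> {0..1}" "z = curve (real (f u)) (real (f v)) t"
      using z uv unfolding path_image_def by auto
    obtain t' where t': "t' \<in> {0..1}" "z = curve (real (f u')) (real (f v')) t'"
      using z uv' unfolding path_image_def by auto
    show "z \<in> pos ` V"
    proof (cases "Im z = 0")
      case True
      then have "z = Complex (real (f u)) 0 \<or> z = Complex (real (f v)) 0"
        using curve_Im_zero[of "real (f u)" "real (f v)" t] t uv by auto
      then show ?thesis using uv unfolding pos_def by auto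
    next
      case False
      define x where "x = Re z"
      have im1: "Im z = (x - f u) * (f v - x)" using t curve_Im unfolding x_def by metis
      have im2: "Im z = (x - f u') * (f v' - x)" using t' curve_Im unfolding x_def by metis
      have r1: "f u \<le> x" "x \<le> f v" using curve_Re_range[of "real (f u)" "real (f v)" t] t uv unfolding x_def by auto
      have r2: "f u' \<le> x" "x \<le> f v'" using curve_Re_range[of "real (f u')" "real (f v')" t'] t' uv' unfolding x_def by auto
      have s1: "real (f u) < x" "x < f v" using r1 im1 False by (auto simp: order.order_iff_strict)
      have s2: "real (f u') < x" "x < f v'" using r2 im2 False by (auto simp: order.order_iff_strict)
      have ne: "f u \<noteq> f u' \<or> f v \<noteq> f v'"
      proof (rule ccontr)
        assume "\<not> ?thesis"
        then have "u = u'" "v = v'" using inj uv uv' unfolding inj_on_def by auto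
        then show False using ee uv uv' by auto
      qed
      have c1: "\<not> (f u < f u' \<and> f u' < f v \<and> f v < f v')" using nc[of u v u' v'] ee uv uv' by auto
      have c2: "\<not> (f u' < f u \<and> f u < f v' \<and> f v' < f v)" using nc[of u' v' u v] ee uv uv' by auto
      show ?thesis
        using no_common_point[of "real (f u)" x "real (f v)" "real (f u')" "real (f v')"] s1 s2 im1 im2 ne c1 c2
        by auto
    qed
  qed
  define S where "S = pos ` V \<union> (\<Union>e\<in>E. path_image (\<gamma> e))"
  have Sup: "\<And>z. z \<in> S \<Longrightarrow> 0 \<le> Im z"
  proof -
    fix z assume "z \<in> S"
    then show "0 \<le> Im z"
    proof (cases "z \<in> pos ` V")
      case True then show ?thesis using Vreal by auto
    next
      case False
      then obtain e where "e \<in> E" "z \<in> path_image (\<gamma> e)" using \<open>z \<in> S\<close> S_def by auto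
      then obtain u v t where "f u < f v" "\<gamma> e = curve (real (f u)) (real (f v))" "t \<in> {0..1}" "z = \<gamma> e t"
        using edge unfolding path_image_def by blast
      then show ?thesis using curve_Im_nonneg[of "real (f u)" "real (f v)" t] by auto
    qed
  qed
  define LH where "LH = {z::complex. 0 > Im z}"
  have LHsub: "LH \<subseteq> outside S"
  proof
    fix x assume x: "x \<in> LH"
    have "LH \<subseteq> - S" using Sup unfolding LH_def by force
    then have "LH \<subseteq> connected_component_set (- S) x"
      using connected_component_maximal[of x LH "- S"] x connected_halfspace_Im_lt unfolding LH_def by auto
    moreover have "\<not> bounded LH"
    proof
      assume "bounded LH"
      then obtain M where M: "\<And>z. z \<in> LH \<Longrightarrow> norm z \<le> M" unfolding bounded_iff by blast
      have "Complex 0 (- (\<bar>M\<bar> + 1)) \<in> LH" unfolding LH_def by simp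
      from M[OF this] show False by (simp add: norm_complex_def)
    qed
    ultimately have "\<not> bounded (connected_component_set (- S) x)" using bounded_subset by blast
    then show "x \<in> outside S" unfolding outside by simp
  qed
  have A4: "\<forall>v\<in>V. pos v \<in> frontier (outside S)"
  proof
    fix v assume "v \<in> V"
    have inS: "pos v \<in> S" using \<open>v \<in> V\<close> S_def by auto
    have "pos v \<notin> interior (outside S)"
      using inS interior_subset outside_no_overlap by blast
    moreover have "pos v \<in> closure LH"
      unfolding closure_approachable
    proof (intro allI impI)
      fix \<epsilon> :: real assume "\<epsilon> > 0"
      show "\<exists>y\<in>LH. dist y (pos v) < \<epsilon>"
        using \<open>\<epsilon> > 0\<close>
        by (intro bexI[of _ "pos v - Complex 0 (\<epsilon>/2)"]) (auto simp: LH_def pos_def dist_norm norm_complex_def)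
    qed
    then have "pos v \<in> closure (outside S)" using closure_mono[OF LHsub] by blast
    ultimately show "pos v \<in> frontier (outside S)" unfolding frontier_def by blast
  qed
  show ?thesis
    unfolding outerplanar_def
    using sg injpos A1 A2 A3 A4 unfolding S_def by blast
qed

lemma book_fin: "book V E f \<Longrightarrow> finite V" unfolding book_def by blast
lemma book_inj: "book V E f \<Longrightarrow> inj_on f V" unfolding book_def by blast
lemma book_sub: "book V E f \<Longrightarrow> E \<subseteq> {{u, v} | u v. u \<in> V \<and> v \<in> V \<and> u \<noteq> v}" unfolding book_def by blast
lemma book_nc: "book V E f \<Longrightarrow> {a,b} \<in> E \<Longrightarrow> {c,d} \<in> E \<Longrightarrow> \<not> (f a < f c \<and> f c < f b \<and> f b < f d)"
  unfolding book_def by blast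
lemma bookI: "finite V \<Longrightarrow> inj_on f V \<Longrightarrow> E \<subseteq> {{u, v} | u v. u \<in> V \<and> v \<in> V \<and> u \<noteq> v} \<Longrightarrow>
  (\<And>a b c d. {a,b} \<in> E \<Longrightarrow> {c,d} \<in> E \<Longrightarrow> \<not> (f a < f c \<and> f c < f b \<and> f b < f d)) \<Longrightarrow> book V E f"
  unfolding book_def by blast

lemma pairs_mono: "V \<subseteq> W \<Longrightarrow> {{u, v} | u v. u \<in> V \<and> v \<in> V \<and> u \<noteq> v} \<subseteq> {{u, v} | u v. u \<in> W \<and> v \<in> W \<and> u \<noteq> v}"
  by (auto 0 3)

lemma book_edge_in:
  assumes "book V E f" "{a,b} \<in> E"
  shows "a \<in> V" "b \<in> V" "a \<noteq> b"
proof -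
  obtain u v where "{a,b} = {u,v}" "u \<in> V" "v \<in> V" "u \<noteq> v" using assms unfolding book_def by blast
  then show "a \<in> V" "b \<in> V" "a \<noteq> b" by (auto simp: doubleton_eq_iff)
qed

lemma rot_cross:
  fixes A B C D M t :: nat
  assumes "A < M" "B < M" "C < M" "D < M" "t \<le> M"
  defines "g \<equiv> (\<lambda>x. if t \<le> x then x - t else x + M - t)"
  assumes "g A < g C" "g C < g B" "g B < g D"
  shows "(A < C \<and> C < B \<and> B < D) \<or> (C < B \<and> B < D \<and> D < A) \<or> (B < D \<and> D < A \<and> A < C) \<or> (D < A \<and> A < C \<and> C < B)"
proof -
  have ab: "(t \<le> x \<and> t \<le> y \<and> x < y) \<or> (\<not> t \<le> x \<and> \<not> t \<le> y \<and> x < y) \<or> (t \<le> x \<and> \<not> t \<le> y \<and> y < x)"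
    if "x < M" "y < M" "g x < g y" for x y
    using that assms(5) unfolding g_def by (auto split: if_splits)
  have 1: "(t \<le> A \<and> t \<le> C \<and> A < C) \<or> (\<not> t \<le> A \<and> \<not> t \<le> C \<and> A < C) \<or> (t \<le> A \<and> \<not> t \<le> C \<and> C < A)"
    using ab assms by blast
  have 2: "(t \<le> C \<and> t \<le> B \<and> C < B) \<or> (\<not> t \<le> C \<and> \<not> t \<le> B \<and> C < B) \<or> (t \<le> C \<and> \<not> t \<le> B \<and> B < C)"
    using ab assms by blast
  have 3: "(t \<le> B \<and> t \<le> D \<and> B < D) \<or> (\<not> t \<le> B \<and> \<not> t \<le> D \<and> B < D) \<or> (t \<le> B \<and> \<not> t \<le> D \<and> D < B)"
    using ab assms by blast
  show ?thesis
    using 1 2 3 by (elim disjE; simp)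
qed

lemma book_rotate:
  assumes B: "book V E f" and M: "\<And>v. v \<in> V \<Longrightarrow> f v < M" and t: "t \<le> M"
  shows "book V E (\<lambda>x. if t \<le> f x then f x - t else f x + M - t)" (is "book V E ?g")
proof -
  have inj: "inj_on f V" using B unfolding book_def by blast
  have "inj_on ?g V"
  proof
    fix x y assume xy: "x \<in> V" "y \<in> V" "?g x = ?g y"
    have "f x = f y" using xy M[OF xy(1)] M[OF xy(2)] t by (auto split: if_splits)
    then show "x = y" using inj xy unfolding inj_on_def by blast
  qed
  moreover have "\<not> (?g a < ?g c \<and> ?g c < ?g b \<and> ?g b < ?g d)" if ab: "{a,b} \<in> E" and cd: "{c,d} \<in> E" for a b c d
  proof
    assume cr: "?g a < ?g c \<and> ?g c < ?g b \<and> ?g b < ?g d"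
    have inV: "a \<in> V" "b \<in> V" "c \<in> V" "d \<in> V" using book_edge_in[OF B ab] book_edge_in[OF B cd] by auto
    have nc: "\<And>a b c d. {a,b} \<in> E \<Longrightarrow> {c,d} \<in> E \<Longrightarrow> \<not> (f a < f c \<and> f c < f b \<and> f b < f d)"
      using B unfolding book_def by blast
    have ba: "{b,a} \<in> E" "{d,c} \<in> E" using ab cd by (auto simp: insert_commute)
    from rot_cross[of "f a" M "f b" "f c" "f d" t] M inV t cr
    show False using nc[OF ab cd] nc[OF cd ba(1)] nc[OF ba(1) ba(2)] nc[OF ba(2) ab] by blast
  qed
  ultimately show ?thesis using B unfolding book_def by blast
qed

lemma book_onesum:
  assumes B1: "book V1 E1 f1" and B2: "book V2 E2 f2" and I: "V1 \<inter> V2 = {h}"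
  shows "\<exists>f. book (V1 \<union> V2) (E1 \<union> E2) f"
proof -
  have hV: "h \<in> V1" "h \<in> V2" using I by auto
  have fin1: "finite V1" and fin2: "finite V2" using book_fin[OF B1] book_fin[OF B2] by auto
  define M1 where "M1 = Suc (Max (f1 ` V1))"
  define M2 where "M2 = Suc (Max (f2 ` V2))"
  have lt1: "\<And>v. v \<in> V1 \<Longrightarrow> f1 v < M1" unfolding M1_def using fin1 by (simp add: le_imp_less_Suc)
  have lt2: "\<And>v. v \<in> V2 \<Longrightarrow> f2 v < M2" unfolding M2_def using fin2 by (simp add: le_imp_less_Suc)
  define g1 where "g1 = (\<lambda>x. if Suc (f1 h) \<le> f1 x then f1 x - Suc (f1 h) else f1 x + M1 - Suc (f1 h))"
  define g2 where "g2 = (\<lambda>x. if f2 h \<le> f2 x then f2 x - f2 h else f2 x + M2 - f2 h)"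
  have G1: "book V1 E1 g1" unfolding g1_def using book_rotate[OF B1 lt1, of "Suc (f1 h)"] lt1[OF hV(1)] by simp
  have G2: "book V2 E2 g2" unfolding g2_def using book_rotate[OF B2 lt2, of "f2 h"] lt2[OF hV(2)] by simp
  have i1: "inj_on g1 V1" and i2: "inj_on g2 V2" using book_inj[OF G1] book_inj[OF G2] by auto
  have g1lt: "g1 v < M1" if "v \<in> V1" for v
    using lt1[OF that] lt1[OF hV(1)] unfolding g1_def by auto
  have g1h: "g1 h = M1 - 1" unfolding g1_def using lt1[OF hV(1)] by auto
  have g2h: "g2 h = 0" unfolding g2_def by auto
  have g2pos: "0 < g2 v" if "v \<in> V2" "v \<noteq> h" for v
  proof -
    have "g2 v \<noteq> g2 h" using inj_on_contraD[OF i2 that(2) that(1) hV(2)] .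
    then show ?thesis using g2h by simp
  qed
  define F where "F = (\<lambda>x. if x \<in> V1 then g1 x else g2 x + (M1 - 1))"
  have F1: "F x = g1 x" if "x \<in> V1" for x using that unfolding F_def by simp
  have F2: "F x = g2 x + (M1 - 1)" if "x \<in> V2" for x
  proof (cases "x \<in> V1")
    case True then have "x = h" using I that by blast
    then show ?thesis using g1h g2h unfolding F_def by simp
  next
    case False then show ?thesis unfolding F_def by simp
  qed
  have M1pos: "0 < M1" using lt1[OF hV(1)] by auto
  have le1: "F x \<le> M1 - 1" if "x \<in> V1" for x using F1[OF that] g1lt[OF that] by simp
  have ge2: "M1 - 1 \<le> F x" if "x \<in> V2" for x using F2[OF that] by simp
  have gt2: "M1 \<le> F x" if "x \<in> V2" "x \<noteq> h" for x using F2[OF that(1)] g2pos[OF that] M1pos by simp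
  have injF: "inj_on F (V1 \<union> V2)"
  proof
    fix x y assume xy: "x \<in> V1 \<union> V2" "y \<in> V1 \<union> V2" "F x = F y"
    show "x = y"
    proof (cases "x \<in> V1")
      case xT: True
      show ?thesis
      proof (cases "y \<in> V1")
        case True
        then have "g1 x = g1 y" using xT xy F1 by simp
        then show ?thesis using inj_onD[OF i1 _ xT True] by simp
      next
        case False
        then have "y \<in> V2" "y \<noteq> h" using xy hV by auto
        then have "F y \<ge> M1" by (rule gt2)
        moreover have "F x \<le> M1 - 1" using le1 xT by simp
        ultimately show ?thesis using xy M1pos by simp
      qed
    next
      case xF: False
      then have x2: "x \<in> V2" "x \<noteq> h" using xy hV by auto
      show ?thesis
      proof (cases "y \<in> V1")
        case True
        have "F x \<ge> M1" using gt2 x2 by simp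
        moreover have "F y \<le> M1 - 1" using le1 True by simp
        ultimately show ?thesis using xy M1pos by simp
      next
        case False
        then have y2: "y \<in> V2" using xy by auto
        then have "g2 x = g2 y" using x2 xy F2 by simp
        then show ?thesis using inj_onD[OF i2 _ x2(1) y2] by simp
      qed
    qed
  qed
  have nc1: "\<And>a b c d. {a,b} \<in> E1 \<Longrightarrow> {c,d} \<in> E1 \<Longrightarrow> \<not> (g1 a < g1 c \<and> g1 c < g1 b \<and> g1 b < g1 d)"
    using book_nc[OF G1] by blast
  have nc2: "\<And>a b c d. {a,b} \<in> E2 \<Longrightarrow> {c,d} \<in> E2 \<Longrightarrow> \<not> (g2 a < g2 c \<and> g2 c < g2 b \<and> g2 b < g2 d)"
    using book_nc[OF G2] by blast
  have ncF: "\<not> (F a < F c \<and> F c < F b \<and> F b < F d)" if ab: "{a,b} \<in> E1 \<union> E2" and cd: "{c,d} \<in> E1 \<union> E2" for a b c d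
  proof
    assume cr: "F a < F c \<and> F c < F b \<and> F b < F d"
    consider "{a,b} \<in> E1" "{c,d} \<in> E1" | "{a,b} \<in> E2" "{c,d} \<in> E2" | "{a,b} \<in> E1" "{c,d} \<in> E2" | "{a,b} \<in> E2" "{c,d} \<in> E1"
      using ab cd by blast
    then show False
    proof cases
      case 1
      have m: "a \<in> V1" "b \<in> V1" "c \<in> V1" "d \<in> V1" using book_edge_in[OF B1 1(1)] book_edge_in[OF B1 1(2)] by auto
      have "g1 a < g1 c \<and> g1 c < g1 b \<and> g1 b < g1 d" using cr F1[OF m(1)] F1[OF m(2)] F1[OF m(3)] F1[OF m(4)] by simp
      then show False using nc1[OF 1] by blast
    next
      case 2
      have m: "a \<in> V2" "b \<in> V2" "c \<in> V2" "d \<in> V2" using book_edge_in[OF B2 2(1)] book_edge_in[OF B2 2(2)] by auto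
      have "g2 a < g2 c \<and> g2 c < g2 b \<and> g2 b < g2 d" using cr F2[OF m(1)] F2[OF m(2)] F2[OF m(3)] F2[OF m(4)] by simp
      then show False using nc2[OF 2] by blast
    next
      case 3
      have "b \<in> V1" "c \<in> V2" using book_edge_in[OF B1 3(1)] book_edge_in[OF B2 3(2)] by auto
      then show False using cr le1[of b] ge2[of c] by simp
    next
      case 4
      have "a \<in> V2" "d \<in> V1" using book_edge_in[OF B2 4(1)] book_edge_in[OF B1 4(2)] by auto
      then show False using cr le1[of d] ge2[of a] by simp
    qed
  qed
  have s1: "E1 \<subseteq> {{u, v} | u v. u \<in> V1 \<and> v \<in> V1 \<and> u \<noteq> v}" and s2: "E2 \<subseteq> {{u, v} | u v. u \<in> V2 \<and> v \<in> V2 \<and> u \<noteq> v}"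
    using book_sub[OF B1] book_sub[OF B2] by auto
  have e1: "E1 \<subseteq> {{u, v} | u v. u \<in> V1 \<union> V2 \<and> v \<in> V1 \<union> V2 \<and> u \<noteq> v}"
    using order_trans[OF s1 pairs_mono[of V1 "V1 \<union> V2"]] by simp
  have e2: "E2 \<subseteq> {{u, v} | u v. u \<in> V1 \<union> V2 \<and> v \<in> V1 \<union> V2 \<and> u \<noteq> v}"
    using order_trans[OF s2 pairs_mono[of V2 "V1 \<union> V2"]] by simp
  have sub: "E1 \<union> E2 \<subseteq> {{u, v} | u v. u \<in> V1 \<union> V2 \<and> v \<in> V1 \<union> V2 \<and> u \<noteq> v}"
    using e1 e2 by (rule Un_least)
  have "book (V1 \<union> V2) (E1 \<union> E2) F"
    by (rule bookI[OF _ injF sub ncF]) (use fin1 fin2 in simp)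
  then show ?thesis by blast
qed

lemma book_pair:
  assumes "x \<noteq> y"
  shows "book {x,y} {{x,y}} (\<lambda>z. if z = x then 0 else 1)"
proof (rule bookI)
  show "inj_on (\<lambda>z. if z = x then 0 else 1::nat) {x, y}" using assms by (auto simp: inj_on_def)
  show "{{x, y}} \<subseteq> {{u, v} |u v. u \<in> {x, y} \<and> v \<in> {x, y} \<and> u \<noteq> v}" using assms by (auto intro!: exI)
  fix a b c d
  have le: "\<And>z. (if z = x then 0 else 1::nat) \<le> 1" by simp
  show "\<not> ((if a = x then 0 else 1::nat) < (if c = x then 0 else 1) \<and> (if c = x then 0 else 1::nat) < (if b = x then 0 else 1) \<and>
          (if b = x then 0 else 1::nat) < (if d = x then 0 else 1))"
    using le[of a] le[of b] le[of c] le[of d] by linarith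
qed simp

lemma book_leaf:
  assumes B: "book V E f" and "x \<notin> V" "y \<in> V"
  shows "\<exists>f'. book (insert x V) (insert {x,y} E) f'"
proof -
  have "x \<noteq> y" using assms by auto
  have "V \<inter> {x,y} = {y}" using assms by auto
  from book_onesum[OF B book_pair[OF \<open>x \<noteq> y\<close>] this] show ?thesis
    using assms(3) by (simp add: insert_commute insert_absorb)
qed

lemma book_isolated:
  assumes B: "book V E f" and x: "x \<notin> V"
  shows "\<exists>f'. book (insert x V) E f'"
proof -
  have fin: "finite V" using book_fin[OF B] .
  define f' where "f' = f(x := Suc (Max (f ` V)))"
  have lt: "\<And>v. v \<in> V \<Longrightarrow> f v < Suc (Max (f ` V))" using fin by (simp add: le_imp_less_Suc)
  have inj: "inj_on f V" using book_inj[OF B] .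
  have "inj_on f' (insert x V)"
    unfolding inj_on_def
  proof (intro ballI impI)
    fix a b assume ab: "a \<in> insert x V" "b \<in> insert x V" "f' a = f' b"
    consider "a = x" "b = x" | "a = x" "b \<in> V" "b \<noteq> x" | "a \<in> V" "a \<noteq> x" "b = x" | "a \<in> V" "b \<in> V" "a \<noteq> x" "b \<noteq> x"
      using ab(1,2) by blast
    then show "a = b"
    proof cases
      case 1 then show ?thesis by simp
    next
      case 2 then show ?thesis using ab(3) lt[of b] unfolding f'_def by simp
    next
      case 3 then show ?thesis using ab(3) lt[of a] unfolding f'_def by simp
    next
      case 4
      then have "f a = f b" using ab(3) unfolding f'_def by simp
      then show ?thesis using inj_onD[OF inj _ 4(1) 4(2)] by simp
    qed
  qed
  moreover have "E \<subseteq> {{u, v} | u v. u \<in> insert x V \<and> v \<in> insert x V \<and> u \<noteq> v}"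
    using order_trans[OF book_sub[OF B] pairs_mono[of V "insert x V"]] by blast
  moreover have "\<not> (f' a < f' c \<and> f' c < f' b \<and> f' b < f' d)" if "{a,b} \<in> E" "{c,d} \<in> E" for a b c d
  proof -
    have "a \<noteq> x" "b \<noteq> x" "c \<noteq> x" "d \<noteq> x" using book_edge_in[OF B that(1)] book_edge_in[OF B that(2)] x by auto
    then show ?thesis using book_nc[OF B that] unfolding f'_def by simp
  qed
  ultimately have "book (insert x V) E f'" using fin by (intro bookI) auto
  then show ?thesis by blast
qed

lemma book_empty:
  assumes "finite V"
  shows "\<exists>f. book V {} f"
proof -
  obtain f :: "'a \<Rightarrow> nat" where "inj_on f V" using finite_imp_inj_to_nat_seg[OF assms] by blast
  then have "book V {} f" using assms by (intro bookI) auto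
  then show ?thesis by blast
qed

lemma ic_sub:
  assumes "(\<lambda>a b. a \<in> A \<and> b \<in> A \<and> {a, b} \<in> E)\<^sup>*\<^sup>* x y" "A \<subseteq> S" "E \<subseteq> E'"
  shows "(\<lambda>a b. a \<in> S \<and> b \<in> S \<and> {a, b} \<in> E')\<^sup>*\<^sup>* x y"
proof -
  have le: "(\<lambda>a b. a \<in> A \<and> b \<in> A \<and> {a, b} \<in> E) \<le> (\<lambda>a b. a \<in> S \<and> b \<in> S \<and> {a, b} \<in> E')"
    using assms(2,3) by auto
  show ?thesis by (rule predicate2D[OF rtranclp_mono[OF le] assms(1)])
qed

lemma ic_mono:
  assumes "induces_connected E S" "E \<subseteq> E'"
  shows "induces_connected E' S"
  using assms ic_sub[of S E _ _ S E'] unfolding induces_connected_def by blast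

lemma ic_sym:
  assumes "(\<lambda>a b. a \<in> S \<and> b \<in> S \<and> {a, b} \<in> E)\<^sup>*\<^sup>* x y"
  shows "(\<lambda>a b. a \<in> S \<and> b \<in> S \<and> {a, b} \<in> E)\<^sup>*\<^sup>* y x"
proof -
  have "symp (\<lambda>a b. a \<in> S \<and> b \<in> S \<and> {a, b} \<in> E)" unfolding symp_def by (auto simp: insert_commute)
  then show ?thesis by (rule sympD[OF symp_rtranclp, OF _ assms])
qed

lemma ic_union:
  assumes "induces_connected E A" "induces_connected E B" "h \<in> A" "h \<in> B"
  shows "induces_connected E (A \<union> B)"
proof -
  have toh: "(\<lambda>a b. a \<in> A \<union> B \<and> b \<in> A \<union> B \<and> {a, b} \<in> E)\<^sup>*\<^sup>* x h" if "x \<in> A \<union> B" for x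
  proof (cases "x \<in> A")
    case True
    then have "(\<lambda>a b. a \<in> A \<and> b \<in> A \<and> {a, b} \<in> E)\<^sup>*\<^sup>* x h" using assms(1,3) unfolding induces_connected_def by blast
    then show ?thesis by (rule ic_sub) auto
  next
    case False
    then have "(\<lambda>a b. a \<in> B \<and> b \<in> B \<and> {a, b} \<in> E)\<^sup>*\<^sup>* x h" using that assms(2,4) unfolding induces_connected_def by blast
    then show ?thesis by (rule ic_sub) auto
  qed
  show ?thesis unfolding induces_connected_def
  proof (intro ballI)
    fix x y assume "x \<in> A \<union> B" "y \<in> A \<union> B"
    from toh[OF this(1)] ic_sym[OF toh[OF this(2)]]
    show "(\<lambda>a b. a \<in> A \<union> B \<and> b \<in> A \<union> B \<and> {a, b} \<in> E)\<^sup>*\<^sup>* x y" by (rule rtranclp_trans)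
  qed
qed

lemma ic_edge:
  assumes "{x,y} \<in> E"
  shows "induces_connected E {x,y}"
  unfolding induces_connected_def
proof (intro ballI)
  fix a b assume ab: "a \<in> {x,y}" "b \<in> {x,y}"
  show "(\<lambda>a b. a \<in> {x,y} \<and> b \<in> {x,y} \<and> {a, b} \<in> E)\<^sup>*\<^sup>* a b"
  proof (cases "a = b")
    case True then show ?thesis by simp
  next
    case False
    then have "{a,b} \<in> E" using ab assms by (auto simp: insert_commute)
    then have "(\<lambda>a b. a \<in> {x,y} \<and> b \<in> {x,y} \<and> {a, b} \<in> E) a b" using ab by simp
    then show ?thesis by (rule r_into_rtranclp)
  qed
qed

lemma ic_single:
  assumes "S \<subseteq> {h}"
  shows "induces_connected E S"
  unfolding induces_connected_def
proof (intro ballI)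
  fix x y assume "x \<in> S" "y \<in> S"
  then have "x = y" using assms by blast
  then show "(\<lambda>a b. a \<in> S \<and> b \<in> S \<and> {a, b} \<in> E)\<^sup>*\<^sup>* x y" by simp
qed

lemma co4_rot: "cyclic_order4 a b c d \<Longrightarrow> cyclic_order4 b c d a"
  unfolding cyclic_order4_def by blast

definition sep :: "nat set \<Rightarrow> nat \<Rightarrow> nat \<Rightarrow> bool" where
  "sep H p q \<longleftrightarrow> (\<exists>h\<in>H. \<exists>h'\<in>H. cyclic_order4 p h q h')"

lemma sep_sym: "sep H p q \<Longrightarrow> sep H q p"
  unfolding sep_def using co4_rot by blast

lemma sep_irrefl: "\<not> sep H p p"
  unfolding sep_def cyclic_order4_def by auto

lemma co4_split:
  fixes p h r h' q :: nat
  assumes "cyclic_order4 p h r h'" "q \<noteq> h" "q \<noteq> h'" "q \<noteq> p" "q \<noteq> r"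
  shows "cyclic_order4 p h q h' \<or> cyclic_order4 q h r h'"
  using assms unfolding cyclic_order4_def
  apply (elim disjE)
  apply (cases "q < p"; cases "q < h"; cases "q < r"; cases "q < h'"; simp)+
  done

lemma sep_trans_neg:
  assumes "q \<notin> H" "\<not> sep H p q" "\<not> sep H q r"
  shows "\<not> sep H p r"
proof
  assume "sep H p r"
  then obtain h h' where hh: "h \<in> H" "h' \<in> H" "cyclic_order4 p h r h'" unfolding sep_def by blast
  show False
  proof (cases "q = p \<or> q = r")
    case True then show False using assms \<open>sep H p r\<close> by auto
  next
    case False
    then have "cyclic_order4 p h q h' \<or> cyclic_order4 q h r h'"
    proof -
      have "q \<noteq> h" "q \<noteq> h'" using assms(1) hh(1,2) by auto
      then show ?thesis using co4_split[OF hh(3), of q] False by blast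
    qed
    then show False using assms(2,3) hh(1,2) unfolding sep_def by blast
  qed
qed

definition dc :: "nat \<Rightarrow> nat \<Rightarrow> nat \<Rightarrow> nat" where
  "dc n a x = (if a \<le> x then x - a else x + n - a)"

lemma dc_lt: "a < n \<Longrightarrow> x < n \<Longrightarrow> dc n a x < n"
  unfolding dc_def by auto
lemma dc_self: "dc n a a = 0" unfolding dc_def by auto
lemma dc_zero: "a < n \<Longrightarrow> x < n \<Longrightarrow> dc n a x = 0 \<Longrightarrow> x = a"
  unfolding dc_def by (auto split: if_splits)
lemma dc_inj: "a < n \<Longrightarrow> x < n \<Longrightarrow> y < n \<Longrightarrow> dc n a x = dc n a y \<Longrightarrow> x = y"
  unfolding dc_def by (auto split: if_splits)

lemma dc_co4:
  assumes "a < n" "b < n" "c < n" "e < n" "0 < dc n a b" "dc n a b < dc n a c" "dc n a c < dc n a e"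
  shows "cyclic_order4 a b c e"
proof -
  consider "a \<le> b" "a \<le> c" "a \<le> e" | "a \<le> b" "a \<le> c" "\<not> a \<le> e" | "a \<le> b" "\<not> a \<le> c" "\<not> a \<le> e" | "\<not> a \<le> b" "\<not> a \<le> c" "\<not> a \<le> e"
    | "a \<le> b" "\<not> a \<le> c" "a \<le> e" | "\<not> a \<le> b" "a \<le> c" "a \<le> e" | "\<not> a \<le> b" "a \<le> c" "\<not> a \<le> e" | "\<not> a \<le> b" "\<not> a \<le> c" "a \<le> e"
    by blast
  then show ?thesis
  proof cases
    case 1 then have "a < b \<and> b < c \<and> c < e" using assms unfolding dc_def by auto
    then show ?thesis unfolding cyclic_order4_def by blast
  next
    case 2 then have "e < a \<and> a < b \<and> b < c" using assms unfolding dc_def by auto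
    then show ?thesis unfolding cyclic_order4_def by blast
  next
    case 3 then have "c < e \<and> e < a \<and> a < b" using assms unfolding dc_def by auto
    then show ?thesis unfolding cyclic_order4_def by blast
  next
    case 4 then have "b < c \<and> c < e \<and> e < a" using assms unfolding dc_def by auto
    then show ?thesis unfolding cyclic_order4_def by blast
  next
    case 5 then have False using assms unfolding dc_def by auto
    then show ?thesis ..
  next
    case 6 then have False using assms unfolding dc_def by auto
    then show ?thesis ..
  next
    case 7 then have False using assms unfolding dc_def by auto
    then show ?thesis ..
  next
    case 8 then have False using assms unfolding dc_def by auto
    then show ?thesis ..
  qed
qed

lemma dc_A4:
  assumes "p < n" "s < n" "y < n" "dc n p s \<le> dc n p y" "p \<noteq> s" "p \<noteq> y"
  shows "dc n s y < dc n s p"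
  using assms unfolding dc_def by (auto split: if_splits)

lemma dc_A5:
  assumes "a < n" "b < n" "c < n" "dc n b c \<le> dc n a c"
  shows "dc n a b + dc n b c = dc n a c"
  using assms unfolding dc_def by (auto split: if_splits)

lemma dc_A6:
  assumes "a < n" "b < n" "c < n" "dc n a b \<le> dc n a c"
  shows "dc n a b + dc n b c = dc n a c"
  using assms unfolding dc_def by (auto split: if_splits)

lemma dc_A7:
  assumes "a < n" "b < n" "y < n" "dc n a b + dc n b y < n"
  shows "dc n a y = dc n a b + dc n b y"
  using assms unfolding dc_def by (auto split: if_splits)

lemma dc_A8a:
  assumes "sB < n" "sP < n" "sH < n" "sP < sH" "\<not> (sP < sB \<and> sB < sH)" "sB \<noteq> sH"
  shows "dc n sB sP < dc n sB sH"
  using assms unfolding dc_def by (auto split: if_splits)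

lemma dc_A8b:
  assumes "sB < n" "sP < n" "sH < n" "sH < sB" "sB \<le> sP"
  shows "dc n sB sP < dc n sB sH"
  using assms unfolding dc_def by (auto split: if_splits)

lemma pairsetI: "P a b \<Longrightarrow> {a,b} \<in> {{x,y} | x y. P x y}"
  by blast

lemma pairsetE: "e \<in> {{x,y} | x y. P x y} \<Longrightarrow> \<exists>x y. e = {x,y} \<and> P x y"
  by blast

lemma pairset_mem:
  assumes "{a,b} \<in> {{x,y} | x y. P x y}"
  shows "P a b \<or> P b a"
proof -
  obtain x y where xy: "{a,b} = {x,y}" "P x y" using pairsetE[OF assms] by blast
  then have "(a = x \<and> b = y) \<or> (a = y \<and> b = x)" by (simp add: doubleton_eq_iff)
  then show ?thesis using xy(2) by blast
qed

lemma cycle_case: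
  fixes n :: nat and \<H> :: "nat set set"
  assumes sub: "\<H> \<subseteq> Pow {0..<n}"
    and anti: "\<And>H K. H \<in> \<H> \<Longrightarrow> K \<in> \<H> \<Longrightarrow> H \<subseteq> K \<Longrightarrow> H = K"
    and irr: "\<And>H p q. H \<in> \<H> \<Longrightarrow> p \<in> \<Union>\<H> - H \<Longrightarrow> q \<in> \<Union>\<H> - H \<Longrightarrow> \<not> sep H p q"
    and two: "2 \<le> card \<H>"
  shows "\<exists>E f. book \<H> E f \<and> (\<forall>v. induces_connected E {H \<in> \<H>. v \<in> H})"
proof -
  define U where "U = \<Union>\<H>"
  have fin: "finite \<H>" using sub finite_subset by (metis finite_Pow_iff finite_atLeastLessThan)
  have ltn: "x < n" if "H \<in> \<H>" "x \<in> H" for H x using subsetD[OF sub that(1)] that(2) by auto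
  have Un: "x < n" if "x \<in> U" for x using ltn that U_def by auto
  have other: "\<exists>K\<in>\<H>. K \<noteq> H" if "H \<in> \<H>" for H
  proof (rule ccontr)
    assume "\<not> ?thesis"
    then have "\<H> \<subseteq> {H}" by auto
    then have "card \<H> \<le> 1" using card_mono[of "{H}" \<H>] by simp
    then show False using two by simp
  qed
  have outside: "U - H \<noteq> {}" if HH: "H \<in> \<H>" for H
  proof -
    obtain K where K: "K \<in> \<H>" "K \<noteq> H" using other[OF HH] by blast
    then have "\<not> K \<subseteq> H" using anti HH by blast
    then show ?thesis using K U_def by auto
  qed
  have nonempty: "H \<noteq> {}" if HH: "H \<in> \<H>" for H
  proof
    assume "H = {}"
    obtain K where K: "K \<in> \<H>" "K \<noteq> H" using other[OF HH] by blast
    then show False using anti[OF HH K(1)] \<open>H = {}\<close> by simp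
  qed
  define pt where "pt H = (SOME p. p \<in> U - H)" for H
  have pt: "pt H \<in> U - H" if "H \<in> \<H>" for H
  proof -
    have "\<exists>p. p \<in> U - H" using outside[OF that] by blast
    then show ?thesis unfolding pt_def by (rule someI_ex)
  qed
  define st where "st H = arg_min (dc n (pt H)) (\<lambda>h. h \<in> H)" for H
  have st: "st H \<in> H \<and> (\<forall>h. h \<in> H \<longrightarrow> dc n (pt H) (st H) \<le> dc n (pt H) h)" if "H \<in> \<H>" for H
  proof -
    have "H \<noteq> {}" using nonempty[OF that] .
    then obtain h where "h \<in> H" by blast
    then show ?thesis unfolding st_def by (rule arg_min_nat_lemma)
  qed
  have st_in: "st H \<in> H" if "H \<in> \<H>" for H using st[OF that] by blast
  have st_min: "dc n (pt H) (st H) \<le> dc n (pt H) h" if "H \<in> \<H>" "h \<in> H" for H h using st[OF that(1)] that(2) by blast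
  have st_lt: "st H < n" if "H \<in> \<H>" for H using ltn[OF that st_in[OF that]] .
  have interval: "x \<in> H" if a: "H \<in> \<H>" "x \<in> U" "y \<in> H" "dc n (st H) x \<le> dc n (st H) y" for H x y
  proof (rule ccontr)
    assume xH: "x \<notin> H"
    define s where "s = st H"
    define p where "p = pt H"
    have sH: "s \<in> H" using st_in[OF a(1)] s_def by simp
    have pU: "p \<in> U - H" using pt[OF a(1)] p_def by simp
    have lt: "s < n" "p < n" "x < n" "y < n" using ltn[OF a(1) sH] Un pU a(2) ltn[OF a(1) a(3)] by auto
    have ne: "x \<noteq> s" "x \<noteq> y" "p \<noteq> s" "p \<noteq> y" using xH sH pU a(3) by auto
    have 1: "0 < dc n s x"
    proof (rule ccontr)
      assume "\<not> 0 < dc n s x"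
      then have "dc n s x = 0" by simp
      then have "x = s" using dc_zero[OF lt(1) lt(3)] by simp
      then show False using ne by simp
    qed
    have 2: "dc n s x < dc n s y"
    proof -
      have "dc n s x \<noteq> dc n s y" using dc_inj[OF lt(1) lt(3) lt(4)] ne(2) by blast
      then show ?thesis using a(4) s_def by simp
    qed
    have 3: "dc n s y < dc n s p"
      using dc_A4[OF lt(2) lt(1) lt(4)] st_min[OF a(1) a(3)] ne(3,4) unfolding s_def p_def by simp
    have "cyclic_order4 s x y p" by (rule dc_co4[OF lt(1) lt(3) lt(4) lt(2) 1 2 3])
    then have "cyclic_order4 x y p s" by (rule co4_rot)
    then have "sep H x p" unfolding sep_def using a(3) sH by blast
    moreover have "x \<in> \<Union>\<H> - H" "p \<in> \<Union>\<H> - H" using a(2) xH pU U_def by auto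
    ultimately show False using irr[OF a(1)] by blast
  qed
  have st_inj: "inj_on st \<H>"
  proof (rule inj_onI)
    fix H K assume HK: "H \<in> \<H>" "K \<in> \<H>" "st H = st K"
    show "H = K"
    proof (rule ccontr)
      assume "H \<noteq> K"
      then have "\<not> H \<subseteq> K" "\<not> K \<subseteq> H" using anti HK by blast+
      then obtain y z where yz: "y \<in> H" "y \<notin> K" "z \<in> K" "z \<notin> H" by blast
      have yU: "y \<in> U" and zU: "z \<in> U" using yz HK U_def by auto
      have "dc n (st H) y \<le> dc n (st H) z \<or> dc n (st H) z \<le> dc n (st H) y" by linarith
      then show False
      proof
        assume "dc n (st H) y \<le> dc n (st H) z"
        then have "y \<in> K" using interval[OF HK(2) yU yz(3)] HK(3) by simp
        then show False using yz by simp
      next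
        assume "dc n (st H) z \<le> dc n (st H) y"
        then have "z \<in> H" using interval[OF HK(1) zU yz(1)] by simp
        then show False using yz by simp
      qed
    qed
  qed
  have st_eq: "H = K" if "H \<in> \<H>" "K \<in> \<H>" "st H = st K" for H K using inj_onD[OF st_inj that(3) that(1,2)] .
  define Q1 where "Q1 H K \<longleftrightarrow> H \<in> \<H> \<and> K \<in> \<H> \<and> st H < st K \<and> (\<forall>L\<in>\<H>. \<not> (st H < st L \<and> st L < st K))" for H K
  define Q2 where "Q2 H K \<longleftrightarrow> H \<in> \<H> \<and> K \<in> \<H> \<and> H \<noteq> K \<and> (\<forall>L\<in>\<H>. st H \<le> st L \<and> st L \<le> st K)" for H K
  define E1 where "E1 = {{H,K} | H K. Q1 H K}"
  define E2 where "E2 = {{H,K} | H K. Q2 H K}"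
  define E3 where "E3 = E1 \<union> E2"
  have E3_cases: "Q1 a b \<or> Q1 b a \<or> Q2 a b \<or> Q2 b a" if "{a,b} \<in> E3" for a b
  proof (cases "{a,b} \<in> E1")
    case True
    then show ?thesis using pairset_mem[of a b Q1] unfolding E1_def by blast
  next
    case False
    then have "{a,b} \<in> E2" using that E3_def by blast
    then show ?thesis using pairset_mem[of a b Q2] unfolding E2_def by blast
  qed
  have E3_in: "a \<in> \<H> \<and> b \<in> \<H> \<and> a \<noteq> b" if "{a,b} \<in> E3" for a b
  proof -
    have "Q1 a b \<or> Q1 b a \<or> Q2 a b \<or> Q2 b a" using E3_cases[OF that] .
    then show ?thesis unfolding Q1_def Q2_def by auto
  qed
  have E3_sub: "E3 \<subseteq> {{u, v} | u v. u \<in> \<H> \<and> v \<in> \<H> \<and> u \<noteq> v}"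
  proof
    fix e assume e: "e \<in> E3"
    have "e \<in> E1 \<or> e \<in> E2" using e E3_def by simp
    then obtain a b where eab: "e = {a,b}"
    proof
      assume "e \<in> E1"
      then have "e \<in> {{x,y} | x y. Q1 x y}" by (simp only: E1_def)
      from pairsetE[OF this] obtain x y where "e = {x,y}" by blast
      then show thesis by (rule that)
    next
      assume "e \<in> E2"
      then have "e \<in> {{x,y} | x y. Q2 x y}" by (simp only: E2_def)
      from pairsetE[OF this] obtain x y where "e = {x,y}" by blast
      then show thesis by (rule that)
    qed
    have "{a,b} \<in> E3" using e eab by simp
    then have "a \<in> \<H> \<and> b \<in> \<H> \<and> a \<noteq> b" by (rule E3_in)
    then have "{a,b} \<in> {{u, v} | u v. u \<in> \<H> \<and> v \<in> \<H> \<and> u \<noteq> v}"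
      by (rule pairsetI[where P = "\<lambda>u v. u \<in> \<H> \<and> v \<in> \<H> \<and> u \<noteq> v"])
    then show "e \<in> {{u, v} | u v. u \<in> \<H> \<and> v \<in> \<H> \<and> u \<noteq> v}" unfolding eab .
  qed
  have E3_nc: "\<not> (st a < st c \<and> st c < st b \<and> st b < st d)" if ab: "{a,b} \<in> E3" and cd: "{c,d} \<in> E3" for a b c d
  proof
    assume cr: "st a < st c \<and> st c < st b \<and> st b < st d"
    have c1: "c \<in> \<H>" "d \<in> \<H>" using E3_in[OF cd] by auto
    have c2: "a \<in> \<H>" "b \<in> \<H>" using E3_in[OF ab] by auto
    from E3_cases[OF ab] show False
    proof (elim disjE)
      assume "Q1 a b"
      then have "\<not> (st a < st c \<and> st c < st b)" using c1(1) unfolding Q1_def by blast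
      then show False using cr by simp
    next
      assume "Q1 b a" then have "st b < st a" unfolding Q1_def by blast
      then show False using cr by simp
    next
      assume "Q2 a b"
      then have "st d \<le> st b" using c1(2) unfolding Q2_def by blast
      then show False using cr by simp
    next
      assume "Q2 b a"
      then have "st b \<le> st a" using c2(1) unfolding Q2_def by blast
      then show False using cr by simp
    qed
  qed
  have book3: "book \<H> E3 st" by (rule bookI[OF fin st_inj E3_sub E3_nc])
  have pred: "\<exists>P\<in>\<H>. P \<noteq> H \<and> {H,P} \<in> E3 \<and> (\<forall>B\<in>\<H>. B \<noteq> H \<longrightarrow> dc n (st B) (st P) < dc n (st B) (st H))"
    if H: "H \<in> \<H>" for H
  proof (cases "\<exists>L\<in>\<H>. st L < st H")
    case True
    define m where "m = Max {st L | L. L \<in> \<H> \<and> st L < st H}"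
    have finS: "finite {st L | L. L \<in> \<H> \<and> st L < st H}" using fin by simp
    have neS: "{st L | L. L \<in> \<H> \<and> st L < st H} \<noteq> {}" using True by blast
    have "m \<in> {st L | L. L \<in> \<H> \<and> st L < st H}" unfolding m_def using Max_in[OF finS neS] .
    then obtain P where P: "P \<in> \<H>" "st P < st H" "st P = m" by blast
    have Pmax: "st L \<le> st P" if "L \<in> \<H>" "st L < st H" for L
    proof -
      have "st L \<in> {st L | L. L \<in> \<H> \<and> st L < st H}" using that by blast
      then show ?thesis using Max_ge[OF finS] P(3) unfolding m_def by simp
    qed
    have "P \<noteq> H" using P by auto
    moreover have "{H,P} \<in> E3"
    proof -
      have "Q1 P H" unfolding Q1_def using P H Pmax by force
      then have "{P,H} \<in> E1" unfolding E1_def by (rule pairsetI)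
      then show ?thesis unfolding E3_def by (simp add: insert_commute)
    qed
    moreover have "dc n (st B) (st P) < dc n (st B) (st H)" if "B \<in> \<H>" "B \<noteq> H" for B
    proof -
      have "st B \<noteq> st H" using st_eq[OF that(1) H] that(2) by blast
      moreover have "\<not> (st P < st B \<and> st B < st H)" using Pmax[OF that(1)] by auto
      ultimately show ?thesis using dc_A8a[OF st_lt[OF that(1)] st_lt[OF P(1)] st_lt[OF H] P(2)] by blast
    qed
    ultimately show ?thesis using P(1) by blast
  next
    case False
    define m where "m = Max (st ` \<H>)"
    have neS: "st ` \<H> \<noteq> {}" using H by blast
    have "m \<in> st ` \<H>" unfolding m_def using Max_in[OF _ neS] fin by simp
    then obtain P where P: "P \<in> \<H>" "st P = m" by blast
    have Pmax: "st L \<le> st P" if "L \<in> \<H>" for L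
      using Max_ge[of "st ` \<H>" "st L"] fin that P(2) unfolding m_def by simp
    have Hmin: "st H \<le> st L" if "L \<in> \<H>" for L using False that by auto
    obtain K where K: "K \<in> \<H>" "K \<noteq> H" using other[OF H] by blast
    have "st K \<noteq> st H" using st_eq[OF K(1) H] K(2) by blast
    then have "st H < st K" using Hmin[OF K(1)] by simp
    then have "P \<noteq> H" using Pmax[OF K(1)] by auto
    moreover have "{H,P} \<in> E3"
    proof -
      have "Q2 H P" unfolding Q2_def using P H Pmax Hmin \<open>P \<noteq> H\<close> by force
      then have "{H,P} \<in> E2" unfolding E2_def by (rule pairsetI)
      then show ?thesis unfolding E3_def by simp
    qed
    moreover have "dc n (st B) (st P) < dc n (st B) (st H)" if "B \<in> \<H>" "B \<noteq> H" for B
    proof -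
      have "st B \<noteq> st H" using st_eq[OF that(1) H] that(2) by blast
      then have "st H < st B" using Hmin[OF that(1)] by simp
      then show ?thesis using dc_A8b[OF st_lt[OF that(1)] st_lt[OF P(1)] st_lt[OF H]] Pmax[OF that(1)] by blast
    qed
    ultimately show ?thesis using P(1) by blast
  qed
  have conn: "induces_connected E3 {H \<in> \<H>. u \<in> H}" for u
  proof (cases "{H \<in> \<H>. u \<in> H} = {}")
    case True
    then have "{H \<in> \<H>. u \<in> H} \<subseteq> {undefined}" by blast
    then show ?thesis by (rule ic_single)
  next
    case False
    define T where "T = {H \<in> \<H>. u \<in> H}"
    have finT: "finite T" using fin T_def by simp
    have neT: "T \<noteq> {}" using False T_def by simp
    define mm where "mm = Max ((\<lambda>X. dc n (st X) u) ` T)"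
    have "mm \<in> (\<lambda>X. dc n (st X) u) ` T" unfolding mm_def using Max_in finT neT by simp
    then obtain B where B: "B \<in> T" "dc n (st B) u = mm" by blast
    have Bmax: "dc n (st X) u \<le> dc n (st B) u" if "X \<in> T" for X
      using Max_ge[of "(\<lambda>X. dc n (st X) u) ` T"] finT that B(2) unfolding mm_def by simp
    have BH: "B \<in> \<H>" "u \<in> B" using B T_def by auto
    have un: "u < n" using ltn[OF BH] .
    have uU: "u \<in> U" using BH U_def by auto
    define R where "R = (\<lambda>a b. a \<in> T \<and> b \<in> T \<and> {a, b} \<in> E3)"
    have key: "\<forall>H\<in>T. dc n (st B) (st H) = k \<longrightarrow> R\<^sup>*\<^sup>* H B" for k
    proof (induction k rule: less_induct)
      case (less k)
      show ?case
      proof (intro ballI impI)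
        fix H assume HT: "H \<in> T" and Hk: "dc n (st B) (st H) = k"
        show "R\<^sup>*\<^sup>* H B"
        proof (cases "H = B")
          case True then show ?thesis by simp
        next
          case HB: False
          have HH: "H \<in> \<H>" "u \<in> H" using HT T_def by auto
          obtain P where P: "P \<in> \<H>" "P \<noteq> H" "{H,P} \<in> E3" "dc n (st B) (st P) < dc n (st B) (st H)"
            using pred[OF HH(1)] BH(1) HB by blast
          have lts: "st B < n" "st H < n" "st P < n" using st_lt BH(1) HH(1) P(1) by auto
          have "dc n (st B) (st H) + dc n (st H) u = dc n (st B) u"
            using dc_A5[OF lts(1) lts(2) un Bmax[OF HT]] .
          then have d1: "dc n (st B) (st P) < dc n (st B) u" using P(4) by simp
          then have d2: "dc n (st B) (st P) + dc n (st P) u = dc n (st B) u"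
            using dc_A6[OF lts(1) lts(3) un] by simp
          have uP: "u \<in> P"
          proof (rule ccontr)
            assume nuP: "u \<notin> P"
            have "P \<subseteq> B"
            proof
              fix y assume yP: "y \<in> P"
              have yn: "y < n" using ltn[OF P(1) yP] .
              have yU: "y \<in> U" using yP P(1) U_def by auto
              have "dc n (st P) y < dc n (st P) u"
              proof (rule ccontr)
                assume "\<not> ?thesis"
                then have "dc n (st P) u \<le> dc n (st P) y" by simp
                then have "u \<in> P" using interval[OF P(1) uU yP] by simp
                then show False using nuP by simp
              qed
              then have "dc n (st B) (st P) + dc n (st P) y < dc n (st B) u" using d2 by simp
              moreover have "dc n (st B) u < n" using dc_lt[OF lts(1) un] .
              ultimately have "dc n (st B) y = dc n (st B) (st P) + dc n (st P) y"
                using dc_A7[OF lts(1) lts(3) yn] by simp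
              then have "dc n (st B) y \<le> dc n (st B) u"
                using \<open>dc n (st B) (st P) + dc n (st P) y < dc n (st B) u\<close> by simp
              then show "y \<in> B" using interval[OF BH(1) yU BH(2)] by simp
            qed
            then have "P = B" using anti[OF P(1) BH(1)] by simp
            then show False using nuP BH(2) by simp
          qed
          have PT: "P \<in> T" using P(1) uP T_def by simp
          have "R H P" unfolding R_def using HT PT P(3) by simp
          moreover have "R\<^sup>*\<^sup>* P B" using less[OF P(4)[unfolded Hk]] PT by blast
          ultimately show ?thesis by (rule converse_rtranclp_into_rtranclp)
        qed
      qed
    qed
    show ?thesis unfolding induces_connected_def
    proof (intro ballI)
      fix x y assume xy: "x \<in> {H \<in> \<H>. u \<in> H}" "y \<in> {H \<in> \<H>. u \<in> H}"
      have "R\<^sup>*\<^sup>* x B" "R\<^sup>*\<^sup>* y B" using key xy T_def by blast+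
      then have "R\<^sup>*\<^sup>* x B" "R\<^sup>*\<^sup>* B y" using ic_sym[of T E3 y B] unfolding R_def by auto
      then have "R\<^sup>*\<^sup>* x y" by (rule rtranclp_trans)
      then show "(\<lambda>a b. a \<in> {H \<in> \<H>. u \<in> H} \<and> b \<in> {H \<in> \<H>. u \<in> H} \<and> {a, b} \<in> E3)\<^sup>*\<^sup>* x y"
        unfolding R_def T_def .
    qed
  qed
  show ?thesis using book3 conn by blast
qed

lemma axax_pair_split: "axax_pair \<H> H K \<longleftrightarrow> H \<in> \<H> \<and> K \<in> \<H> \<and> axax_pair UNIV H K"
  unfolding axax_pair_def by simp

lemma axax_free_mono: "axax_free \<H> \<Longrightarrow> \<H>' \<subseteq> \<H> \<Longrightarrow> axax_free \<H>'"
  unfolding axax_free_def using axax_pair_split[of \<H>'] axax_pair_split[of \<H>] by blast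

lemma axax_nsep:
  assumes "axax_free \<H>" "K \<in> \<H>" "H \<in> \<H>" "x \<in> K - H" "y \<in> K - H"
  shows "\<not> sep H x y"
proof
  assume "sep H x y"
  then obtain h h' where hh: "h \<in> H" "h' \<in> H" "cyclic_order4 x h y h'" unfolding sep_def by blast
  have "\<exists>a1 x1 a2 x2. cyclic_order4 a1 x1 a2 x2 \<and> a1 \<in> K - H \<and> a2 \<in> K - H \<and> x1 \<in> H \<and> x2 \<in> H"
    using hh assms(4,5) by blast
  then have "axax_pair \<H> K H" unfolding axax_pair_def using assms(2,3) by simp
  then show False using assms(1) unfolding axax_free_def by blast
qed

lemma main_ind:
  fixes n :: nat
  shows "\<H> \<subseteq> Pow {0..<n} \<Longrightarrow> axax_free \<H> \<Longrightarrow> \<exists>E f. book \<H> E f \<and> (\<forall>v. induces_connected E {H \<in> \<H>. v \<in> H})"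
proof (induction "card \<H>" arbitrary: \<H> rule: less_induct)
  case less
  have sub: "\<H> \<subseteq> Pow {0..<n}" and ax: "axax_free \<H>" using less.prems by auto
  have fin: "finite \<H>" using sub finite_subset by (metis finite_Pow_iff finite_atLeastLessThan)
  have IH: "\<And>\<H>'. \<H>' \<subset> \<H> \<Longrightarrow> \<exists>E f. book \<H>' E f \<and> (\<forall>v. induces_connected E {H \<in> \<H>'. v \<in> H})"
  proof -
    fix \<H>' assume "\<H>' \<subset> \<H>"
    then have c: "card \<H>' < card \<H>" using psubset_card_mono[OF fin] by blast
    have s: "\<H>' \<subseteq> Pow {0..<n}" using \<open>\<H>' \<subset> \<H>\<close> sub by blast
    have a: "axax_free \<H>'" using axax_free_mono[OF ax] \<open>\<H>' \<subset> \<H>\<close> by blast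
    show "\<exists>E f. book \<H>' E f \<and> (\<forall>v. induces_connected E {H \<in> \<H>'. v \<in> H})"
      by (rule less.hyps[OF c s a])
  qed
  show ?case
  proof (cases "\<exists>H0\<in>\<H>. \<exists>H1\<in>\<H>. H0 \<subset> H1")
    case True
    then obtain H0 H1 where H01: "H0 \<in> \<H>" "H1 \<in> \<H>" "H0 \<subset> H1" by blast
    define \<H>' where "\<H>' = \<H> - {H0}"
    have ps: "\<H>' \<subset> \<H>" using H01 \<H>'_def by blast
    obtain E' f' where B': "book \<H>' E' f'" and C': "\<forall>v. induces_connected E' {H \<in> \<H>'. v \<in> H}"
      using IH[OF ps] by blast
    have H0n: "H0 \<notin> \<H>'" and H1i: "H1 \<in> \<H>'" using H01 \<H>'_def by auto
    obtain f where B: "book (insert H0 \<H>') (insert {H0,H1} E') f" using book_leaf[OF B' H0n H1i] by blast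
    have eqH: "insert H0 \<H>' = \<H>" using H01 \<H>'_def by blast
    have "induces_connected (insert {H0,H1} E') {H \<in> \<H>. v \<in> H}" for v
    proof (cases "v \<in> H0")
      case True
      have S: "{H \<in> \<H>. v \<in> H} = {H \<in> \<H>'. v \<in> H} \<union> {H0,H1}" using True H01 \<H>'_def by auto
      have "induces_connected (insert {H0,H1} E') {H \<in> \<H>'. v \<in> H}" using ic_mono[OF C'[rule_format, of v]] by blast
      moreover have "induces_connected (insert {H0,H1} E') {H0,H1}" by (rule ic_edge) simp
      moreover have "H1 \<in> {H \<in> \<H>'. v \<in> H}" using H1i True H01 by auto
      ultimately show ?thesis unfolding S by (rule ic_union) simp
    next
      case False
      have S: "{H \<in> \<H>. v \<in> H} = {H \<in> \<H>'. v \<in> H}" using False \<H>'_def by auto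
      show ?thesis unfolding S using ic_mono[OF C'[rule_format, of v]] by blast
    qed
    then show ?thesis using B eqH by auto
  next
    case noleaf: False
    have anti: "H = K" if "H \<in> \<H>" "K \<in> \<H>" "H \<subseteq> K" for H K
    proof (rule ccontr)
      assume "H \<noteq> K"
      with that(3) have "H \<subset> K" by (rule psubsetI)
      then show False using noleaf that(1,2) by blast
    qed
    show ?thesis
    proof (cases "\<exists>H\<in>\<H>. \<exists>p q. p \<in> \<Union>\<H> - H \<and> q \<in> \<Union>\<H> - H \<and> sep H p q")
      case True
      then obtain H p q where Hpq: "H \<in> \<H>" "p \<in> \<Union>\<H> - H" "q \<in> \<Union>\<H> - H" "sep H p q" by blast
      obtain K1 where K1: "K1 \<in> \<H>" "p \<in> K1" "p \<notin> H" using Hpq by blast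
      obtain K2 where K2: "K2 \<in> \<H>" "q \<in> K2" "q \<notin> H" using Hpq by blast
      have nsK: "\<not> sep H x y" if "K \<in> \<H>" "x \<in> K - H" "y \<in> K - H" for K x y
        using axax_nsep[OF ax that(1) Hpq(1) that(2,3)] .
      define \<H>1 where "\<H>1 = {K \<in> \<H>. \<forall>x\<in>K - H. \<not> sep H p x}"
      define \<H>2 where "\<H>2 = {K \<in> \<H>. \<forall>x\<in>K - H. sep H p x}"
      have allsep: "\<forall>y\<in>K - H. sep H p y" if "K \<in> \<H>" "x \<in> K - H" "sep H p x" for K x
      proof
        fix y assume y: "y \<in> K - H"
        show "sep H p y"
        proof (rule ccontr)
          assume "\<not> sep H p y"
          moreover have "\<not> sep H y x" using nsK[OF that(1) y that(2)] .
          ultimately have "\<not> sep H p x" using sep_trans_neg[of y H p x] y by blast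
          then show False using that(3) by simp
        qed
      qed
      have cover: "\<H> = \<H>1 \<union> \<H>2"
      proof
        show "\<H> \<subseteq> \<H>1 \<union> \<H>2"
        proof
          fix K assume K: "K \<in> \<H>"
          show "K \<in> \<H>1 \<union> \<H>2"
          proof (cases "\<exists>x\<in>K - H. sep H p x")
            case True
            then obtain x where "x \<in> K - H" "sep H p x" by blast
            then have "K \<in> \<H>2" using allsep[OF K] K \<H>2_def by blast
            then show ?thesis by blast
          next
            case False
            then have "K \<in> \<H>1" using K \<H>1_def by blast
            then show ?thesis by blast
          qed
        qed
        show "\<H>1 \<union> \<H>2 \<subseteq> \<H>" unfolding \<H>1_def \<H>2_def by blast
      qed
      have inter: "\<H>1 \<inter> \<H>2 = {H}"
      proof
        show "\<H>1 \<inter> \<H>2 \<subseteq> {H}"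
        proof
          fix K assume K: "K \<in> \<H>1 \<inter> \<H>2"
          then have "K - H = {}" unfolding \<H>1_def \<H>2_def by blast
          then have "K \<subseteq> H" by blast
          then show "K \<in> {H}" using anti[of K H] K Hpq(1) \<H>1_def by blast
        qed
        show "{H} \<subseteq> \<H>1 \<inter> \<H>2" using Hpq(1) unfolding \<H>1_def \<H>2_def by blast
      qed
      have K1in: "K1 \<in> \<H>1" unfolding \<H>1_def using K1 nsK[OF K1(1), of p] by blast
      have K1out: "K1 \<notin> \<H>2" unfolding \<H>2_def using K1 sep_irrefl[of H p] by blast
      have K2in: "K2 \<in> \<H>2" unfolding \<H>2_def using K2 allsep[OF K2(1), of q] Hpq(4) by blast
      have K2out: "K2 \<notin> \<H>1" unfolding \<H>1_def using K2 Hpq(4) by blast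
      have ps1: "\<H>1 \<subset> \<H>" using cover K2out K2(1) by blast
      have ps2: "\<H>2 \<subset> \<H>" using cover K1out K1(1) by blast
      obtain E1 f1 where B1: "book \<H>1 E1 f1" and C1: "\<forall>v. induces_connected E1 {K \<in> \<H>1. v \<in> K}"
        using IH[OF ps1] by blast
      obtain E2 f2 where B2: "book \<H>2 E2 f2" and C2: "\<forall>v. induces_connected E2 {K \<in> \<H>2. v \<in> K}"
        using IH[OF ps2] by blast
      obtain f where B: "book (\<H>1 \<union> \<H>2) (E1 \<union> E2) f" using book_onesum[OF B1 B2 inter] by blast
      have "induces_connected (E1 \<union> E2) {K \<in> \<H>. v \<in> K}" for v
      proof (cases "v \<in> H")
        case True
        have S: "{K \<in> \<H>. v \<in> K} = {K \<in> \<H>1. v \<in> K} \<union> {K \<in> \<H>2. v \<in> K}" using cover by blast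
        have "induces_connected (E1 \<union> E2) {K \<in> \<H>1. v \<in> K}" using ic_mono[OF C1[rule_format, of v]] by blast
        moreover have "induces_connected (E1 \<union> E2) {K \<in> \<H>2. v \<in> K}" using ic_mono[OF C2[rule_format, of v]] by blast
        moreover have "H \<in> {K \<in> \<H>1. v \<in> K}" "H \<in> {K \<in> \<H>2. v \<in> K}" using inter True by auto
        ultimately show ?thesis unfolding S by (rule ic_union)
      next
        case vH: False
        show ?thesis
        proof (cases "sep H p v")
          case True
          have S: "{K \<in> \<H>. v \<in> K} = {K \<in> \<H>2. v \<in> K}"
          proof
            show "{K \<in> \<H>. v \<in> K} \<subseteq> {K \<in> \<H>2. v \<in> K}"
            proof
              fix K assume K: "K \<in> {K \<in> \<H>. v \<in> K}"
              then have "v \<in> K - H" using vH by blast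
              then have "K \<notin> \<H>1" unfolding \<H>1_def using True by blast
              then show "K \<in> {K \<in> \<H>2. v \<in> K}" using K cover by blast
            qed
            show "{K \<in> \<H>2. v \<in> K} \<subseteq> {K \<in> \<H>. v \<in> K}" using cover by blast
          qed
          show ?thesis unfolding S using ic_mono[OF C2[rule_format, of v]] by blast
        next
          case False
          have S: "{K \<in> \<H>. v \<in> K} = {K \<in> \<H>1. v \<in> K}"
          proof
            show "{K \<in> \<H>. v \<in> K} \<subseteq> {K \<in> \<H>1. v \<in> K}"
            proof
              fix K assume K: "K \<in> {K \<in> \<H>. v \<in> K}"
              then have "v \<in> K - H" using vH by blast
              then have "K \<notin> \<H>2" unfolding \<H>2_def using False by blast
              then show "K \<in> {K \<in> \<H>1. v \<in> K}" using K cover by blast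
            qed
            show "{K \<in> \<H>1. v \<in> K} \<subseteq> {K \<in> \<H>. v \<in> K}" using cover by blast
          qed
          show ?thesis unfolding S using ic_mono[OF C1[rule_format, of v]] by blast
        qed
      qed
      then show ?thesis using B cover by auto
    next
      case irr0: False
      have irr: "\<not> sep H p q" if "H \<in> \<H>" "p \<in> \<Union>\<H> - H" "q \<in> \<Union>\<H> - H" for H p q
        using irr0 that by blast
      show ?thesis
      proof (cases "card \<H> \<le> 1")
        case True
        obtain f where B: "book \<H> {} f" using book_empty[OF fin] by blast
        have "induces_connected {} {H \<in> \<H>. v \<in> H}" for v
        proof (cases "\<H> = {}")
          case True
          then have "{H \<in> \<H>. v \<in> H} \<subseteq> {undefined}" by blast
          then show ?thesis by (rule ic_single)
        next
          case False
          then obtain h where h: "h \<in> \<H>" by blast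
          have all: "\<forall>a\<in>\<H>. \<forall>b\<in>\<H>. a = b" using True card_le_Suc0_iff_eq[OF fin] by simp
          have "{H \<in> \<H>. v \<in> H} \<subseteq> {h}" using all h by blast
          then show ?thesis by (rule ic_single)
        qed
        then show ?thesis using B by blast
      next
        case False
        then have "2 \<le> card \<H>" by simp
        from cycle_case[OF sub anti irr this] show ?thesis .
      qed
    qed
  qed
qed

theorem mainTheorem17:
  fixes n :: nat and \<H> :: "nat set set"
  assumes "n \<ge> 3" and "\<H> \<subseteq> Pow {0..<n}" and "axax_free \<H>"
  shows "\<exists>E. outerplanar \<H> E \<and> (\<forall>v<n. induces_connected E {H \<in> \<H>. v \<in> H})"
proof -
  obtain E f where B: "book \<H> E f" and C: "\<forall>v. induces_connected E {H \<in> \<H>. v \<in> H}"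
    using main_ind[OF assms(2,3)] by blast
  have "outerplanar \<H> E" using book_outerplanar[OF B] .
  then show ?thesis using C by blast
qed

end
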